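(* Fix an input dimension $d\ge 1$, a hidden size $n\ge 1$ and an activation function $\sigma:\mathbb{R}\to\mathbb{R}$ (applied componentwise). For an integer $R\ge 0$ let $\mathcal{H}_{\mathrm{CPRNN}}(R,n)$ and $\mathcal{H}_{\mathrm{CPBIRNN}}(R,n)$ be the function classes defined in the context. Then: (i) $\mathcal{H}_{\mathrm{CPRNN}}(R,n)\subseteq \mathcal{H}_{\mathrm{CPRNN}}(R+1,n)$ for every $R$; (ii) $\mathcal{H}_{\mathrm{CPRNN}}(R,n)= \mathcal{H}_{\mathrm{CPRNN}}(R+1,n)$ for every $R\ge R_{\max}$. Moreover, assuming $n\le d$: (iii) if $\sigma$ is real analytic and invertible, then $\mathcal{H}_{\mathrm{CPBIRNN}}(R,n)\subsetneq \mathcal{H}_{\mathrm{CPBIRNN}}(R+1,n)$ for every $R< R_{\mathrm{typ\text{-}max}}$; (iv) if $\sigma$ is linear (the identity), then $\mathcal{H}_{\mathrm{CPRNN}}(R,n)\subsetneq \mathcal{H}_{\mathrm{CPRNN}}(R+1,n)$ for every $R< R_{\mathrm{typ\text{-}max}}$.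
   Context: CP decomposition: for matrices $\mathbf{A}\in\mathbb{R}^{d_1\times R},\mathbf{B}\in\mathbb{R}^{d_2\times R},\mathbf{C}\in\mathbb{R}^{d_3\times R}$ with columns $\mathbf a_r,\mathbf b_r,\mathbf c_r$, $[\![\mathbf{A},\mathbf{B},\mathbf{C}]\!]=\sum_{r=1}^R \mathbf a_r\circ\mathbf b_r\circ\mathbf c_r\in\mathbb{R}^{d_1\times d_2\times d_3}$ (outer products). The CP rank of a tensor is the smallest $R$ for which it admits such a decomposition. For a tensor $\mathcal{T}\in\mathbb{R}^{n\times d\times n}$, $h\in\mathbb{R}^n$, $x\in\mathbb{R}^d$, write $(\mathcal{T}\times_1 h\times_2 x)_k=\sum_{i,j}\mathcal{T}_{ijk}h_ix_j$. $R_{\max}$ is the maximum CP rank of tensors in $\mathbb{R}^{n\times d\times n}$; a typical rank is a value $R$ such that the set of tensors in $\mathbb{R}^{n\times d\times n}$ of CP rank $R$ has positive Lebesgue measure, and $R_{\mathrm{typ\text{-}max}}$ is the largest typical rank. A CPRNN of hidden size $n$ and rank $R$ has parameters $\mathbf h^0\in\mathbb{R}^n$, $\mathbf{A}\in\mathbb{R}^{n\times R}$, $\mathbf{B}\in\mathbb{R}^{d\times R}$, $\mathbf{C}\in\mathbb{R}^{n\times R}$, $\mathbf U\in\mathbb{R}^{n\times d}$, $\mathbf V\in\mathbb{R}^{n\times n}$, $\mathbf b\in\mathbb{R}^n$ and activation $\sigma$; on an input sequence $(\mathbf x^1,\dots,\mathbf x^T)$ of vectors in $\mathbb{R}^d$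 (any length $T\ge1$) it computes $\mathbf h^t=\sigma([\![\mathbf{A},\mathbf{B},\mathbf{C}]\!]\times_1\mathbf h^{t-1}\times_2\mathbf x^t+\mathbf V\mathbf h^{t-1}+\mathbf U\mathbf x^t+\mathbf b)$ for $t=1,\dots,T$. A CPBIRNN is a CPRNN with $\mathbf U=0$, $\mathbf V=0$, $\mathbf b=0$. $\mathcal{H}_{\mathrm{CPRNN}}(R,n)$ (resp. $\mathcal{H}_{\mathrm{CPBIRNN}}(R,n)$) is the set of all functions $(\mathbf x^1,\dots,\mathbf x^T)\mapsto(\mathbf h^1,\dots,\mathbf h^T)$ computed by CPRNNs (resp. CPBIRNNs) of rank $R$ and hidden size $n$ with the given activation $\sigma$, as the parameters range over all real values. *)

theory Defs
  imports "HOL-Analysis.Analysis"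
begin

text \<open>Tensors in R^{n x d x n}: entry (i,j,k) is T $ i $ j $ k.
  Dimensions n and d are given by finite index types 'n and 'd.\<close>

type_synonym ('n, 'd) tensor3 = "real ^ 'n ^ 'd ^ 'n"

definition cp_tensor ::
  "nat \<Rightarrow> (nat \<Rightarrow> real ^ 'n) \<Rightarrow> (nat \<Rightarrow> real ^ 'd) \<Rightarrow> (nat \<Rightarrow> real ^ 'n)
     \<Rightarrow> ('n, 'd) tensor3" where
  "cp_tensor R A B C = (\<chi> i j k. \<Sum>r<R. (A r $ i) * (B r $ j) * (C r $ k))"

definition cp_rank :: "('n::finite, 'd::finite) tensor3 \<Rightarrow> nat" where
  "cp_rank T = (LEAST R. \<exists>A B C. T = cp_tensor R A B C)"

definition R_max :: "('n::finite \<times> 'd::finite) itself \<Rightarrow> nat" where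
  "R_max _ = Max (range (cp_rank :: ('n, 'd) tensor3 \<Rightarrow> nat))"

definition typical_rank :: "('n::finite \<times> 'd::finite) itself \<Rightarrow> nat \<Rightarrow> bool" where
  "typical_rank _ R \<longleftrightarrow>
     (let S = {T :: ('n, 'd) tensor3. cp_rank T = R}
      in S \<in> sets lebesgue \<and> emeasure lebesgue S > 0)"

definition R_typ_max :: "('n::finite \<times> 'd::finite) itself \<Rightarrow> nat" where
  "R_typ_max ty = Max {R. typical_rank ty R}"

definition mode12 :: "('n::finite, 'd::finite) tensor3 \<Rightarrow> real ^ 'n \<Rightarrow> real ^ 'd \<Rightarrow> real ^ 'n" where
  "mode12 T h x = (\<chi> k. \<Sum>i\<in>UNIV. \<Sum>j\<in>UNIV. T $ i $ j $ k * h $ i * x $ j)"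

definition act :: "(real \<Rightarrow> real) \<Rightarrow> real ^ 'n \<Rightarrow> real ^ 'n" where
  "act \<sigma> v = (\<chi> k. \<sigma> (v $ k))"

fun cprnn_run ::
  "(real \<Rightarrow> real) \<Rightarrow> ('n::finite, 'd::finite) tensor3 \<Rightarrow> real ^ 'n ^ 'n \<Rightarrow> real ^ 'd ^ 'n
     \<Rightarrow> real ^ 'n \<Rightarrow> real ^ 'n \<Rightarrow> (real ^ 'd) list \<Rightarrow> (real ^ 'n) list" where
  "cprnn_run \<sigma> T V U b h [] = []"
| "cprnn_run \<sigma> T V U b h (x # xs) =
     (let h' = act \<sigma> (mode12 T h x + V *v h + U *v x + b)
      in h' # cprnn_run \<sigma> T V U b h' xs)"

definition H_CPRNN ::
  "(real \<Rightarrow> real) \<Rightarrow> nat \<Rightarrow> ((real ^ 'd::finite) list \<Rightarrow> (real ^ 'n::finite) list) set" where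
  "H_CPRNN \<sigma> R = {f. \<exists>h0 A B C U V b.
      f = (\<lambda>xs. cprnn_run \<sigma> (cp_tensor R A B C) V U b h0 xs)}"

definition H_CPBIRNN ::
  "(real \<Rightarrow> real) \<Rightarrow> nat \<Rightarrow> ((real ^ 'd::finite) list \<Rightarrow> (real ^ 'n::finite) list) set" where
  "H_CPBIRNN \<sigma> R = {f. \<exists>h0 A B C.
      f = (\<lambda>xs. cprnn_run \<sigma> (cp_tensor R A B C) 0 0 0 h0 xs)}"

definition real_analytic :: "(real \<Rightarrow> real) \<Rightarrow> bool" where
  "real_analytic f \<longleftrightarrow> (\<forall>x. \<exists>r>0. \<exists>a::nat \<Rightarrow> real.
      \<forall>y. \<bar>y - x\<bar> < r \<longrightarrow> (\<lambda>k. a k * (y - x) ^ k) sums f y)"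

end

theory Submission
  imports Defs "HOL-Computational_Algebra.Polynomial"
begin

definition rank1 :: "real ^ 'n \<Rightarrow> real ^ 'd \<Rightarrow> real ^ 'n \<Rightarrow> ('n, 'd) tensor3" where
  "rank1 a b c = (\<chi> i j k. a $ i * b $ j * c $ k)"

definition cpS :: "nat \<Rightarrow> ('n::finite, 'd::finite) tensor3 set" where
  "cpS r = {T. \<exists>A B C. T = cp_tensor r A B C}"

lemma rank1_zero[simp]: "rank1 0 b c = 0" "rank1 a 0 c = 0" "rank1 a b 0 = 0"
  by (simp_all add: rank1_def vec_eq_iff)

lemma cp_tensor_0[simp]: "cp_tensor 0 A B C = 0"
  by (simp add: cp_tensor_def vec_eq_iff)

lemma cp_tensor_Suc: "cp_tensor (Suc r) A B C = cp_tensor r A B C + rank1 (A r) (B r) (C r)"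
  by (simp add: cp_tensor_def rank1_def vec_eq_iff)

lemma cp_tensor_cong: "(\<And>i. i < r \<Longrightarrow> A i = A' i \<and> B i = B' i \<and> C i = C' i) \<Longrightarrow>
   cp_tensor r A B C = cp_tensor r A' B' C'"
  by (simp add: cp_tensor_def vec_eq_iff)

lemma cp_tensor_pad: "cp_tensor (Suc r) (A(r := 0)) B C = cp_tensor r A B C"
proof -
  have "cp_tensor r (A(r := 0)) B C = cp_tensor r A B C" by (rule cp_tensor_cong) auto
  then show ?thesis by (simp add: cp_tensor_Suc rank1_def vec_eq_iff)
qed

lemma cpS_0: "0 \<in> cpS 0" unfolding cpS_def by (intro CollectI exI) simp

lemma cpS_add1: assumes "T \<in> cpS r" shows "T + rank1 a b c \<in> cpS (Suc r)"
proof -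
  obtain A B C where T: "T = cp_tensor r A B C" using assms cpS_def by blast
  have "cp_tensor r (A(r:=a)) (B(r:=b)) (C(r:=c)) = cp_tensor r A B C" by (rule cp_tensor_cong) auto
  then have "T + rank1 a b c = cp_tensor (Suc r) (A(r:=a)) (B(r:=b)) (C(r:=c))"
    by (simp add: cp_tensor_Suc T)
  then show ?thesis unfolding cpS_def by blast
qed

lemma cpS_Suc: "cpS r \<subseteq> cpS (Suc r)"
proof
  fix T assume "T \<in> cpS r"
  from cpS_add1[OF \<open>T \<in> cpS r\<close>, of 0 0 0] show "T \<in> cpS (Suc r)" by simp
qed

lemma cpS_mono: "r \<le> s \<Longrightarrow> cpS r \<subseteq> cpS s"
  by (induction s rule: dec_induct) (use cpS_Suc in auto)

lemma cp_in_cpS: "cp_tensor r A B C \<in> cpS r" unfolding cpS_def by blast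

lemma sum_rank1_in: "finite F \<Longrightarrow> (\<Sum>p\<in>F. rank1 (a p) (b p) (c p)) \<in> cpS (card F)"
proof (induction F rule: finite_induct)
  case empty then show ?case using cpS_0 by simp
next
  case (insert x F)
  then show ?case using cpS_add1[OF insert.IH, of "a x" "b x" "c x"] by (simp add: add.commute)
qed

lemma tensor_decomp: "(T::('n::finite,'d::finite) tensor3) = (\<Sum>p\<in>UNIV. rank1 (axis (fst p) 1) (\<chi> j. T $ fst p $ j $ snd p) (axis (snd p) 1))"
proof -
  have "(\<Sum>p\<in>UNIV. rank1 (axis (fst p) 1) (\<chi> j. T $ fst p $ j $ snd p) (axis (snd p) 1)) $ i $ j $ k = T $ i $ j $ k" for i j k
  proof -
    have "(\<Sum>p\<in>UNIV. rank1 (axis (fst p) 1) (\<chi> j. T $ fst p $ j $ snd p) (axis (snd p) 1)) $ i $ j $ k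
       = (\<Sum>p\<in>UNIV. (if p = (i,k) then T $ i $ j $ k else 0))"
      unfolding sum_component rank1_def axis_def by (rule sum.cong) (auto simp: prod_eq_iff)
    also have "\<dots> = T $ i $ j $ k" by simp
    finally show ?thesis .
  qed
  then show ?thesis by (simp add: vec_eq_iff)
qed


lemma cpS_all: "(T::('n::finite,'d::finite) tensor3) \<in> cpS (card (UNIV::('n\<times>'n) set))"
  by (subst tensor_decomp) (rule sum_rank1_in, simp)

lemma cp_rank_in: "T \<in> cpS (cp_rank T)"
proof -
  have "\<exists>R A B C. T = cp_tensor R A B C" using cpS_all[of T] unfolding cpS_def by blast
  then have "\<exists>A B C. T = cp_tensor (cp_rank T) A B C" unfolding cp_rank_def by (rule LeastI_ex)
  then show ?thesis unfolding cpS_def by blast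
qed

lemma cp_rank_le: "T \<in> cpS r \<Longrightarrow> cp_rank T \<le> r"
  unfolding cp_rank_def cpS_def by (rule Least_le) blast

lemma cpS_iff: "T \<in> cpS r \<longleftrightarrow> cp_rank T \<le> r"
  using cp_rank_le cp_rank_in cpS_mono by blast

lemma cp_rank_bound: "cp_rank (T::('n::finite,'d::finite) tensor3) \<le> card (UNIV::('n\<times>'n) set)"
  using cp_rank_le[OF cpS_all] .

lemma finite_range_rank: "finite (range (cp_rank :: ('n::finite,'d::finite) tensor3 \<Rightarrow> nat))"
  by (rule finite_subset[of _ "{..card (UNIV::('n\<times>'n) set)}"]) (use cp_rank_bound in auto)

lemma cp_rank_le_Rmax: "cp_rank (T::('n::finite,'d::finite) tensor3) \<le> R_max TYPE('n \<times> 'd)"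
  unfolding R_max_def using finite_range_rank by (intro Max_ge) auto

lemma H_CPRNN_alt: "H_CPRNN \<sigma> R = {f. \<exists>h0 T U V b. T \<in> cpS R \<and> f = (\<lambda>xs. cprnn_run \<sigma> T V U b h0 xs)}"
  unfolding H_CPRNN_def cpS_def by blast

lemma H_CPBIRNN_alt: "H_CPBIRNN \<sigma> R = {f. \<exists>h0 T. T \<in> cpS R \<and> f = (\<lambda>xs. cprnn_run \<sigma> T 0 0 0 h0 xs)}"
  unfolding H_CPBIRNN_def cpS_def by blast

lemma H_CPRNN_mono: "H_CPRNN \<sigma> R \<subseteq> H_CPRNN \<sigma> (Suc R)"
  unfolding H_CPRNN_alt using cpS_Suc by blast

lemma H_CPBIRNN_mono: "H_CPBIRNN \<sigma> R \<subseteq> H_CPBIRNN \<sigma> (Suc R)"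
  unfolding H_CPBIRNN_alt using cpS_Suc by blast

lemma H_CPRNN_stable:
  assumes "R_max TYPE('n \<times> 'd) \<le> R"
  shows "(H_CPRNN \<sigma> R :: ((real ^ 'd::finite) list \<Rightarrow> (real ^ 'n::finite) list) set) = H_CPRNN \<sigma> (Suc R)"
proof
  have "cpS (Suc R) \<subseteq> (cpS R :: ('n,'d) tensor3 set)"
  proof
    fix T :: "('n,'d) tensor3" assume "T \<in> cpS (Suc R)"
    have "cp_rank T \<le> R" using cp_rank_le_Rmax[of T] assms by linarith
    then show "T \<in> cpS R" by (simp add: cpS_iff)
  qed
  then show "(H_CPRNN \<sigma> (Suc R) :: ((real ^ 'd) list \<Rightarrow> (real ^ 'n) list) set) \<subseteq> H_CPRNN \<sigma> R"
    unfolding H_CPRNN_alt by blast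
qed (rule H_CPRNN_mono)


definition Fk :: "nat \<Rightarrow> real \<Rightarrow> ('n::finite,'d::finite) tensor3 set" where
  "Fk r k = {cp_tensor r A B C | A B C. \<forall>i<r. norm (A i) \<le> k \<and> norm (B i) \<le> k \<and> norm (C i) \<le> k}"

definition Gk :: "real \<Rightarrow> ('n::finite,'d::finite) tensor3 set" where
  "Gk k = (\<lambda>p. rank1 (fst p) (fst (snd p)) (snd (snd p))) ` (cball 0 k \<times> cball 0 k \<times> cball 0 k)"

lemma compact_Gk: "compact (Gk k)"
  unfolding Gk_def rank1_def
  by (intro compact_continuous_image compact_Times compact_cball continuous_on_vec_lambda continuous_intros)

lemma Fk_0: "Fk 0 k = {0}" unfolding Fk_def by auto

lemma Fk_Suc: "(Fk (Suc r) k :: ('n::finite,'d::finite) tensor3 set) = {x + y | x y. x \<in> Fk r k \<and> y \<in> Gk k}"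
proof safe
  fix T assume "T \<in> Fk (Suc r) k"
  then obtain A B C where T: "T = cp_tensor (Suc r) A B C"
    and bd: "\<forall>i<Suc r. norm (A i) \<le> k \<and> norm (B i) \<le> k \<and> norm (C i) \<le> k" unfolding Fk_def by blast
  have "cp_tensor r A B C \<in> Fk r k" unfolding Fk_def using bd
    by (intro CollectI exI[of _ A] exI[of _ B] exI[of _ C]) auto
  moreover have "rank1 (A r) (B r) (C r) \<in> Gk k" unfolding Gk_def using bd
    by (intro image_eqI[where x="(A r, B r, C r)"]) auto
  ultimately show "\<exists>x y. T = x + y \<and> x \<in> Fk r k \<and> y \<in> Gk k"
    using T cp_tensor_Suc by blast
next
  fix x y :: "('n,'d) tensor3" assume x: "x \<in> Fk r k" and y: "y \<in> Gk k"
  obtain A B C where xe: "x = cp_tensor r A B C"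
    and bd: "\<forall>i<r. norm (A i) \<le> k \<and> norm (B i) \<le> k \<and> norm (C i) \<le> k" using x unfolding Fk_def by blast
  obtain a b c where ye: "y = rank1 a b c" and abc: "norm a \<le> k" "norm b \<le> k" "norm c \<le> k"
    using y unfolding Gk_def by auto
  have "cp_tensor r (A(r:=a)) (B(r:=b)) (C(r:=c)) = cp_tensor r A B C" by (rule cp_tensor_cong) auto
  then have "x + y = cp_tensor (Suc r) (A(r:=a)) (B(r:=b)) (C(r:=c))"
    by (simp add: cp_tensor_Suc xe ye)
  moreover have "\<forall>i<Suc r. norm ((A(r:=a)) i) \<le> k \<and> norm ((B(r:=b)) i) \<le> k \<and> norm ((C(r:=c)) i) \<le> k"
    using bd abc by (auto simp: less_Suc_eq)
  ultimately show "x + y \<in> Fk (Suc r) k" unfolding Fk_def by blast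
qed

lemma compact_Fk: "compact (Fk r k)"
proof (induction r)
  case 0 then show ?case by (simp add: Fk_0)
next
  case (Suc r) then show ?case unfolding Fk_Suc by (intro compact_sums compact_Gk)
qed

lemma cpS_UN: "cpS r = (\<Union>k::nat. Fk r (real k))"
proof safe
  fix T assume "T \<in> cpS r"
  then obtain A B C where T: "T = cp_tensor r A B C" unfolding cpS_def by blast
  obtain k :: nat where k: "(\<Sum>i<r. norm (A i) + norm (B i) + norm (C i)) \<le> real k"
    using real_arch_simple by blast
  have "norm (A i) \<le> real k \<and> norm (B i) \<le> real k \<and> norm (C i) \<le> real k" if "i < r" for i
  proof -
    have "norm (A i) + norm (B i) + norm (C i) \<le> (\<Sum>i<r. norm (A i) + norm (B i) + norm (C i))"
      using that by (intro member_le_sum) auto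
    then show ?thesis using k by (smt (verit) norm_ge_zero)
  qed
  then have "T \<in> Fk r (real k)" unfolding Fk_def T by blast
  then show "T \<in> (\<Union>k::nat. Fk r (real k))" by blast
next
  fix T k assume "T \<in> Fk r (real k)"
  then show "T \<in> cpS r" unfolding Fk_def cpS_def by blast
qed

lemma cpS_borel: "cpS r \<in> sets borel"
  unfolding cpS_UN
  by (intro sets.countable_UN[of _ UNIV, simplified] subsetI) (auto intro!: borel_closed compact_imp_closed compact_Fk)

lemma cpS_leb: "cpS r \<in> sets lebesgue"
  using cpS_borel[of r] sets_completionI_sets[of "cpS r" lborel] by simp

definition Prk :: "nat \<Rightarrow> ('n::finite,'d::finite) tensor3 set" where
  "Prk r = {T. cp_rank T = r}"

lemma Prk_eq: "Prk r = cpS r - (if r = 0 then {} else cpS (r - 1))"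
  unfolding Prk_def by (auto simp: cpS_iff)

lemma Prk_leb: "Prk r \<in> sets lebesgue"
  unfolding Prk_eq using cpS_leb by auto

lemma typical_iff: "typical_rank TYPE('n \<times> 'd) r \<longleftrightarrow> emeasure lebesgue (Prk r :: ('n::finite,'d::finite) tensor3 set) > 0"
  unfolding typical_rank_def Prk_def[symmetric] Let_def using Prk_leb by auto

lemma typical_exists: "\<exists>r. typical_rank TYPE('n::finite \<times> 'd::finite) r"
proof (rule ccontr)
  assume "\<not> ?thesis"
  then have z: "Prk r \<in> null_sets (lebesgue :: ('n,'d) tensor3 measure)" for r
    using Prk_leb[of r] by (auto simp: typical_iff null_sets_def)
  have "(UNIV :: ('n,'d) tensor3 set) = (\<Union>r. Prk r)" unfolding Prk_def by auto
  moreover have "(\<Union>r. Prk r) \<in> null_sets (lebesgue :: ('n,'d) tensor3 measure)" by (rule null_sets_UN) (rule z)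
  ultimately have "(UNIV :: ('n,'d) tensor3 set) \<in> null_sets lebesgue" by simp
  then have "emeasure (lebesgue :: ('n,'d) tensor3 measure) UNIV = 0" by auto
  moreover have "emeasure (lebesgue :: ('n,'d) tensor3 measure) UNIV = \<infinity>"
    by simp
  ultimately show False by simp
qed

lemma typical_bound: "typical_rank TYPE('n::finite \<times> 'd::finite) r \<Longrightarrow> r \<le> card (UNIV::('n\<times>'n) set)"
proof -
  assume "typical_rank TYPE('n \<times> 'd) r"
  then have "Prk r \<noteq> ({} :: ('n,'d) tensor3 set)" by (auto simp: typical_iff)
  then obtain T :: "('n,'d) tensor3" where "cp_rank T = r" unfolding Prk_def by auto
  then show ?thesis using cp_rank_bound[of T] by simp
qed

lemma typical_max: "typical_rank TYPE('n::finite \<times> 'd::finite) (R_typ_max TYPE('n \<times> 'd))"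
proof -
  have fin: "finite {R. typical_rank TYPE('n \<times> 'd) R}"
    by (rule finite_subset[of _ "{..card (UNIV::('n\<times>'n) set)}"]) (use typical_bound in auto)
  have "{R. typical_rank TYPE('n \<times> 'd) R} \<noteq> {}" using typical_exists by auto
  then show ?thesis unfolding R_typ_max_def using Max_in[OF fin] by auto
qed


lemma mode12_add: "mode12 (T1 + T2) h x = mode12 T1 h x + mode12 T2 h x"
  by (simp add: mode12_def vec_eq_iff algebra_simps sum.distrib)

lemma mode12_zeroT: "mode12 0 h x = 0"
  by (simp add: mode12_def vec_eq_iff)

lemma mode12_sum: "finite F \<Longrightarrow> mode12 (\<Sum>p\<in>F. T p) h x = (\<Sum>p\<in>F. mode12 (T p) h x)"
  by (induction F rule: finite_induct) (simp_all add: mode12_add mode12_zeroT)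

lemma mode12_rank1: "mode12 (rank1 a b c) h x = ((a \<bullet> h) * (b \<bullet> x)) *\<^sub>R c"
proof -
  have "mode12 (rank1 a b c) h x $ k = ((a \<bullet> h) * (b \<bullet> x)) * c $ k" for k
    unfolding mode12_def rank1_def inner_vec_def inner_real_def vec_lambda_beta sum_product sum_distrib_right
    by (simp add: mult_ac sum_distrib_left)
  then show ?thesis by (simp add: vec_eq_iff)
qed

lemma cp_tensor_sum: "cp_tensor R A B C = (\<Sum>r<R. rank1 (A r) (B r) (C r))"
  by (induction R) (simp_all add: cp_tensor_Suc)

lemma mode12_cp: "mode12 (cp_tensor R A B C) h x = (\<Sum>r<R. ((A r \<bullet> h) * (B r \<bullet> x)) *\<^sub>R C r)"
  by (simp add: cp_tensor_sum mode12_sum mode12_rank1)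

lemma mode12_cp_span: "mode12 (cp_tensor R A B C) h x \<in> span (C ` {..<R})"
  unfolding mode12_cp by (intro span_sum span_scale span_base) auto

lemma mode12_diff_h: "mode12 T (h1 - h2) x = mode12 T h1 x - mode12 T h2 x"
  by (simp add: mode12_def vec_eq_iff algebra_simps sum_subtractf)

lemma mode12_scale_h: "mode12 T (c *\<^sub>R h) x = c *\<^sub>R mode12 T h x"
  by (simp add: mode12_def vec_eq_iff sum_distrib_left algebra_simps)

lemma mode12_zero_h[simp]: "mode12 T 0 x = 0"
  by (simp add: mode12_def vec_eq_iff)

lemma mode12_zero_x[simp]: "mode12 T h 0 = 0"
  by (simp add: mode12_def vec_eq_iff)

lemma mode12_axis: "mode12 T (axis i 1) (axis j 1) $ k = T $ i $ j $ k"
proof -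
  have m: "\<And>(y::real) c. y * (if c then 1 else 0) = (if c then y else 0)" by simp
  show ?thesis unfolding mode12_def axis_def by (simp add: m)
qed

lemma tensor_eqI: "(\<And>i j. mode12 T (axis i 1) (axis j 1) = mode12 T' (axis i 1) (axis j 1)) \<Longrightarrow> T = T'"
  by (metis mode12_axis vec_eq_iff)

lemma mv_zero[simp]: "(0::real^'a^'b) *v v = 0"
  by (simp add: matrix_vector_mult_def vec_eq_iff)

lemma act_inj: "inj \<sigma> \<Longrightarrow> act \<sigma> v = act \<sigma> w \<Longrightarrow> v = w"
  by (auto simp: act_def vec_eq_iff dest: injD)

lemma act_id[simp]: "act id v = v"
  by (simp add: act_def vec_eq_iff)

lemma run2: "cprnn_run \<sigma> T V U b h [x0, x] =
   (let h1 = act \<sigma> (mode12 T h x0 + V *v h + U *v x0 + b) in [h1, act \<sigma> (mode12 T h1 x + V *v h1 + U *v x + b)])"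
  by (simp add: Let_def)

lemma birnn_agree:
  assumes "inj \<sigma>"
    and eq: "(\<lambda>xs. cprnn_run \<sigma> T 0 0 0 h0 xs) = (\<lambda>xs. cprnn_run \<sigma> T' 0 0 0 h0' xs)"
    and x1: "mode12 T h0 x1 = axis i 1"
  shows "mode12 T' (axis i 1) x = mode12 T (axis i 1) x"
proof -
  have ag: "mode12 T' (act \<sigma> (mode12 T h0 x0)) x = mode12 T (act \<sigma> (mode12 T h0 x0)) x" for x0
  proof -
    define h1 where "h1 = act \<sigma> (mode12 T h0 x0)"
    define h1' where "h1' = act \<sigma> (mode12 T' h0' x0)"
    have r1: "cprnn_run \<sigma> T 0 0 0 h0 [x0, x] = [h1, act \<sigma> (mode12 T h1 x)]" by (simp add: h1_def Let_def)
    have r2: "cprnn_run \<sigma> T' 0 0 0 h0' [x0, x] = [h1', act \<sigma> (mode12 T' h1' x)]" by (simp add: h1'_def Let_def)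
    have "[h1, act \<sigma> (mode12 T h1 x)] = [h1', act \<sigma> (mode12 T' h1' x)]" using fun_cong[OF eq, of "[x0, x]"] unfolding r1 r2 .
    then have c: "h1 = h1' \<and> act \<sigma> (mode12 T h1 x) = act \<sigma> (mode12 T' h1' x)"
      by (metis list.inject)
    then have e1: "h1' = h1" and e2: "act \<sigma> (mode12 T h1 x) = act \<sigma> (mode12 T' h1' x)" by blast+
    then have "act \<sigma> (mode12 T h1 x) = act \<sigma> (mode12 T' h1 x)" by simp
    from act_inj[OF assms(1) this] show ?thesis unfolding h1_def by simp
  qed
  have d: "act \<sigma> (axis i 1) - act \<sigma> 0 = (\<sigma> 1 - \<sigma> 0) *\<^sub>R axis i 1"
    by (simp add: act_def vec_eq_iff axis_def)
  have ne: "\<sigma> 1 - \<sigma> 0 \<noteq> 0" using injD[OF assms(1), of 1 0] by auto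
  have a1: "mode12 T' (act \<sigma> (axis i 1)) x = mode12 T (act \<sigma> (axis i 1)) x" using ag[of x1] x1 by simp
  have a0: "mode12 T' (act \<sigma> 0) x = mode12 T (act \<sigma> 0) x" using ag[of 0] by simp
  have "(\<sigma> 1 - \<sigma> 0) *\<^sub>R mode12 T' (axis i 1) x = (\<sigma> 1 - \<sigma> 0) *\<^sub>R mode12 T (axis i 1) x"
  proof -
    have "(\<sigma> 1 - \<sigma> 0) *\<^sub>R mode12 T' (axis i 1) x = mode12 T' (act \<sigma> (axis i 1) - act \<sigma> 0) x"
      by (simp add: mode12_scale_h d)
    also have "\<dots> = mode12 T' (act \<sigma> (axis i 1)) x - mode12 T' (act \<sigma> 0) x" by (rule mode12_diff_h)
    also have "\<dots> = mode12 T (act \<sigma> (axis i 1)) x - mode12 T (act \<sigma> 0) x" using a0 a1 by simp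
    also have "\<dots> = mode12 T (act \<sigma> (axis i 1) - act \<sigma> 0) x" by (rule mode12_diff_h[symmetric])
    also have "\<dots> = (\<sigma> 1 - \<sigma> 0) *\<^sub>R mode12 T (axis i 1) x" by (simp add: mode12_scale_h d)
    finally show ?thesis .
  qed
  then show ?thesis using ne by simp
qed

lemma rnn_id_agree:
  assumes eq: "(\<lambda>xs. cprnn_run id T 0 U 0 0 xs) = (\<lambda>xs. cprnn_run id T' V' U' b' h0' xs)"
    and surj: "\<And>y. \<exists>x. U *v x = y"
  shows "T' = T"
proof -
  have ag: "mode12 T' h x + V' *v h + U' *v x + b' = mode12 T h x + U *v x" for h x
  proof -
    obtain x0 where x0: "U *v x0 = h" using surj by blast
    define h1' where "h1' = mode12 T' h0' x0 + V' *v h0' + U' *v x0 + b'"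
    have r1: "cprnn_run id T 0 U 0 0 [x0, x] = [h, mode12 T h x + U *v x]" by (simp add: x0 Let_def)
    have r2: "cprnn_run id T' V' U' b' h0' [x0, x] = [h1', mode12 T' h1' x + V' *v h1' + U' *v x + b']"
      by (simp add: h1'_def Let_def)
    have "[h, mode12 T h x + U *v x] = [h1', mode12 T' h1' x + V' *v h1' + U' *v x + b']" using fun_cong[OF eq, of "[x0, x]"] unfolding r1 r2 .
    then have c: "h = h1' \<and> mode12 T h x + U *v x = mode12 T' h1' x + V' *v h1' + U' *v x + b'"
      by (metis list.inject)
    then have e1: "h1' = h" and e2: "mode12 T h x + U *v x = mode12 T' h1' x + V' *v h1' + U' *v x + b'"
      by blast+
    from e2 show ?thesis unfolding e1 by simp
  qed
  have b0: "b' = 0" using ag[of 0 0] by simp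
  have U0: "U' *v x = U *v x" for x using ag[of 0 x] b0 by simp
  have V0: "V' *v h = 0" for h using ag[of h 0] b0 by simp
  have "mode12 T' h x = mode12 T h x" for h x using ag[of h x] b0 U0 V0 by simp
  then show ?thesis by (intro tensor_eqI) simp
qed


lemma small_case:
  fixes g :: "'n::finite \<Rightarrow> 'd::finite"
  assumes g: "inj g" and s: "inj \<sigma>" and R: "Suc R \<le> CARD('n)"
  shows "\<exists>f. f \<in> H_CPBIRNN \<sigma> (Suc R) \<and> f \<notin> (H_CPBIRNN \<sigma> R :: ((real^'d) list \<Rightarrow> (real^'n) list) set)"
proof -
  obtain I :: "'n set" where I: "card I = Suc R"
    using obtain_subset_with_card_n[OF R] by blast
  have finI: "finite I" by simp
  define T :: "('n,'d) tensor3" where "T = (\<Sum>i\<in>I. rank1 (axis i 1) (axis (g i) 1) (axis i 1))"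
  have "T \<in> cpS (card I)" unfolding T_def by (rule sum_rank1_in[OF finI])
  then have TS: "T \<in> cpS (Suc R)" using I by simp
  have key: "mode12 T h (axis (g i0) 1) = (axis i0 1 \<bullet> h) *\<^sub>R axis i0 1" if i0: "i0 \<in> I" for h i0
  proof -
    have "mode12 T h (axis (g i0) 1) = (\<Sum>i\<in>I. ((axis i 1 \<bullet> h) * (axis (g i) 1 \<bullet> axis (g i0) (1::real))) *\<^sub>R axis i (1::real))"
      unfolding T_def by (simp add: mode12_sum mode12_rank1)
    also have "\<dots> = (\<Sum>i\<in>I. if i = i0 then (axis i0 1 \<bullet> h) *\<^sub>R axis i0 1 else 0)"
      using g by (intro sum.cong refl) (auto simp: inner_axis_axis dest: injD)
    also have "\<dots> = (axis i0 1 \<bullet> h) *\<^sub>R axis i0 1" using i0 finI by simp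
    finally show ?thesis .
  qed
  define h0 :: "real^'n" where "h0 = vec 1"
  define f where "f = (\<lambda>xs. cprnn_run \<sigma> T 0 0 0 h0 xs)"
  have fin: "f \<in> H_CPBIRNN \<sigma> (Suc R)" unfolding H_CPBIRNN_alt f_def using TS by blast
  have fout: "f \<notin> H_CPBIRNN \<sigma> R"
  proof
    assume "f \<in> H_CPBIRNN \<sigma> R"
    then obtain h0' A B C where feq: "f = (\<lambda>xs. cprnn_run \<sigma> (cp_tensor R A B C) 0 0 0 h0' xs)"
      unfolding H_CPBIRNN_def by blast
    have sp: "axis i0 1 \<in> span (C ` {..<R})" if i0: "i0 \<in> I" for i0
    proof -
      have x1: "mode12 T h0 (axis (g i0) 1) = axis i0 1" using key[OF i0] by (simp add: h0_def inner_axis')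
      have "mode12 (cp_tensor R A B C) (axis i0 1) (axis (g i0) 1) = mode12 T (axis i0 1) (axis (g i0) 1)"
        by (rule birnn_agree[OF s _ x1]) (use feq f_def in simp)
      also have "\<dots> = axis i0 1" using key[OF i0] by (simp add: inner_axis_axis)
      finally have e: "mode12 (cp_tensor R A B C) (axis i0 1) (axis (g i0) 1) = axis i0 1" .
      show ?thesis using mode12_cp_span[of R A B C "axis i0 1" "axis (g i0) 1"] e by simp
    qed
    have ind: "independent ((\<lambda>i. axis i (1::real)) ` I)"
      by (rule independent_mono[OF independent_Basis]) auto
    have "card ((\<lambda>i. axis i (1::real)) ` I) \<le> card (C ` {..<R})"
      using independent_span_bound[OF _ ind] sp by blast
    also have "\<dots> \<le> R" using card_image_le[of "{..<R}" C] by simp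
    finally have "card ((\<lambda>i. axis i (1::real)) ` I) \<le> R" .
    moreover have "card ((\<lambda>i. axis i (1::real)) ` I) = card I"
      by (rule card_image) (auto simp: inj_on_def axis_eq_axis)
    ultimately show False using I by simp
  qed
  show ?thesis using fin fout by blast
qed


lemma det_inj: "det (A::real^'n^'n) \<noteq> 0 \<longleftrightarrow> inj ((*v) A)"
  using det_nz_iff_inj[OF matrix_vector_mul_linear[of A]] by simp

lemma det0_ker: assumes "det (A::real^'n^'n) = 0" shows "\<exists>z. z \<noteq> 0 \<and> A *v z = 0"
proof -
  from assms det_inj[of A] obtain x y where "x \<noteq> y" "A *v x = A *v y" unfolding inj_def by auto
  then show ?thesis by (intro exI[of _ "x - y"]) (simp add: matrix_vector_mult_diff_distrib)
qed

lemma det_surj: assumes "det (A::real^'n^'n) \<noteq> 0" shows "\<exists>z. A *v z = y"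
proof -
  have "invertible A" using assms invertible_det_nz by blast
  then obtain B where "A ** B = mat 1" using invertible_right_inverse by blast
  then have "A *v (B *v y) = y" by (simp add: matrix_vector_mul_assoc)
  then show ?thesis by blast
qed

lemma vec_differentiable:
  fixes f :: "'a::real_normed_vector \<Rightarrow> 'b::real_normed_vector ^ 'm::finite"
  assumes "\<And>i. (\<lambda>x. f x $ i) differentiable (at x)"
  shows "f differentiable (at x)"
proof -
  have bl: "bounded_linear (axis i :: 'b \<Rightarrow> 'b ^ 'm)" for i
  proof (rule bounded_linear_intro[where K=1])
    show "axis i (x + y) = axis i x + axis i y" for x y :: 'b by (auto simp: axis_def vec_eq_iff)
    show "axis i (r *\<^sub>R x) = r *\<^sub>R axis i x" for r and x :: 'b by (simp add: axis_def vec_eq_iff)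
    show "norm (axis i x) \<le> norm x * 1" for x :: 'b
    proof -
      have "norm (axis i x) \<le> (\<Sum>k\<in>UNIV. norm (axis i x $ k))" unfolding norm_vec_def by (rule L2_set_le_sum) simp
      also have "\<dots> = norm x" by (simp add: axis_def if_distrib[of norm] cong: if_cong)
      finally show ?thesis by simp
    qed
  qed
  have eq: "f = (\<lambda>x. \<Sum>i\<in>UNIV. axis i (f x $ i))"
    by (rule ext) (simp add: vec_eq_iff sum_component axis_def)
  have "(\<lambda>x. axis i (f x $ i)) differentiable (at x)" for i
    using differentiable_chain_at[OF assms[of i] bounded_linear_imp_differentiable[OF bl[of i]]]
    by (simp add: o_def)
  then have "(\<lambda>x. \<Sum>i\<in>UNIV. axis i (f x $ i)) differentiable (at x)"
    by (intro differentiable_sum) auto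
  then show ?thesis using eq by metis
qed

lemma coord_differentiable: "(\<lambda>T::('n::finite,'d::finite) tensor3. T $ i $ j $ k) differentiable (at x)"
proof -
  have "bounded_linear (\<lambda>T::('n,'d) tensor3. T $ i $ j $ k)"
    by (intro bounded_linear_compose[OF bounded_linear_vec_nth] bounded_linear_vec_nth)
  then show ?thesis by (rule bounded_linear_imp_differentiable)
qed

definition Mx :: "'n \<Rightarrow> ('n \<Rightarrow> 'd) \<Rightarrow> ('n::finite,'d::finite) tensor3 \<Rightarrow> real^'n^'n" where
  "Mx i0 g T = (\<chi> k j. T $ i0 $ (g j) $ k)"

definition Fj :: "'n \<Rightarrow> ('n \<Rightarrow> 'd) \<Rightarrow> 'n \<Rightarrow> ('n::finite,'d::finite) tensor3 \<Rightarrow> ('n,'d) tensor3" where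
  "Fj i0 g j T = (\<chi> i jj k. if i = i0 \<and> jj = g j then (\<Sum>j'\<in>UNIV. T $ i0 $ (g j) $ j' * T $ i0 $ (g j') $ k) else T $ i $ jj $ k)"

lemma Fj_diff: "Fj i0 g j differentiable_on S"
  unfolding differentiable_on_def
proof
  fix x :: "('a,'b) tensor3"
  show "Fj i0 g j differentiable (at x within S)"
  proof (rule differentiable_at_withinI)
    show "Fj i0 g j differentiable (at x)"
    proof (rule vec_differentiable, rule vec_differentiable, rule vec_differentiable)
      fix i jj k
      show "(\<lambda>T. Fj i0 g j T $ i $ jj $ k) differentiable (at x)"
      proof (cases "i = i0 \<and> jj = g j")
        case True
        then show ?thesis unfolding Fj_def
          by (simp add: coord_differentiable)
      next
        case False
        then have "(\<lambda>T. Fj i0 g j T $ i $ jj $ k) = (\<lambda>T. T $ i $ jj $ k)"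
          unfolding Fj_def by (cases "i = i0") auto
        then show ?thesis by (simp add: coord_differentiable)
      qed
    qed
  qed
qed

lemma Hj_negl: "negligible {T::('n::finite,'d::finite) tensor3. T $ i0 $ gj $ j = 0}"
proof -
  have "{T::('n,'d) tensor3. T $ i0 $ gj $ j = 0} = {T. axis i0 (axis gj (axis j 1)) \<bullet> T = 0}"
    by (simp add: inner_axis')
  also have "negligible \<dots>" by (rule negligible_hyperplane) (simp add: axis_eq_axis)
  finally show ?thesis .
qed

lemma Fj_hit:
  fixes g :: "'n::finite \<Rightarrow> 'd::finite"
  assumes g: "inj g" and z: "Mx i0 g T *v z = 0" and zj: "z $ j \<noteq> 0"
  shows "T \<in> Fj i0 g j ` {T. T $ i0 $ g j $ j = 0}"
proof -
  define c where "c = (\<lambda>j'. if j' = j then 0 else - z $ j' / z $ j)"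
  define T0 :: "('n,'d) tensor3" where
    "T0 = (\<chi> i jj k. if i = i0 \<and> jj = g j then c k else T $ i $ jj $ k)"
  have T0H: "T0 $ i0 $ g j $ j = 0" by (simp add: T0_def c_def)
  have colj: "(\<Sum>j'\<in>UNIV. c j' * T $ i0 $ (g j') $ k) = T $ i0 $ (g j) $ k" for k
  proof -
    have row: "(\<Sum>j'\<in>UNIV. T $ i0 $ (g j') $ k * z $ j') = 0"
      using z unfolding Mx_def by (simp add: vec_eq_iff matrix_vector_mult_def)
    have "c j' * T $ i0 $ (g j') $ k = - (T $ i0 $ (g j') $ k * z $ j') / z $ j + (if j' = j then T $ i0 $ (g j') $ k else 0)" for j'
      using zj by (simp add: c_def field_simps)
    then have "(\<Sum>j'\<in>UNIV. c j' * T $ i0 $ (g j') $ k) = (\<Sum>j'\<in>UNIV. - (T $ i0 $ (g j') $ k * z $ j') / z $ j + (if j' = j then T $ i0 $ (g j') $ k else 0))"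
      by simp
    also have "\<dots> = - (\<Sum>j'\<in>UNIV. T $ i0 $ (g j') $ k * z $ j') / z $ j + T $ i0 $ (g j) $ k"
      by (simp add: sum_subtractf sum_divide_distrib)
    also have "\<dots> = T $ i0 $ (g j) $ k" using row by simp
    finally show ?thesis .
  qed
  have "Fj i0 g j T0 = T"
  proof -
    have "Fj i0 g j T0 $ i $ jj $ k = T $ i $ jj $ k" for i jj k
    proof (cases "i = i0 \<and> jj = g j")
      case True
      have "(\<Sum>j'\<in>UNIV. T0 $ i0 $ (g j) $ j' * T0 $ i0 $ (g j') $ k) = (\<Sum>j'\<in>UNIV. c j' * T $ i0 $ (g j') $ k)"
        by (rule sum.cong) (auto simp: T0_def c_def dest: injD[OF g])
      then show ?thesis using True colj unfolding Fj_def by simp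
    next
      case False
      then show ?thesis unfolding Fj_def T0_def by auto
    qed
    then show ?thesis by (simp add: vec_eq_iff)
  qed
  then show ?thesis using T0H by blast
qed

lemma singular_negligible:
  fixes g :: "'n::finite \<Rightarrow> 'd::finite"
  assumes g: "inj g"
  shows "negligible {T. det (Mx i0 g T) = 0}"
proof -
  have "{T. det (Mx i0 g T) = 0} \<subseteq> (\<Union>j\<in>UNIV. Fj i0 g j ` {T. T $ i0 $ g j $ j = 0})"
  proof
    fix T assume "T \<in> {T. det (Mx i0 g T) = 0}"
    then obtain z where z: "z \<noteq> 0" "Mx i0 g T *v z = 0" using det0_ker by auto
    then obtain j where "z $ j \<noteq> 0" by (auto simp: vec_eq_iff)
    then show "T \<in> (\<Union>j\<in>UNIV. Fj i0 g j ` {T. T $ i0 $ g j $ j = 0})" using Fj_hit[OF g z(2)] by blast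
  qed
  moreover have "negligible (\<Union>j\<in>UNIV. Fj i0 g j ` {T. T $ i0 $ g j $ j = 0})"
    by (intro negligible_Union finite_imageI finite_UNIV)
       (auto intro!: negligible_differentiable_image_negligible[OF order_refl Hj_negl Fj_diff])
  ultimately show ?thesis using negligible_subset by blast
qed


lemma det_poly: "\<exists>p. \<forall>t. det (t *\<^sub>R P + Q) = poly p t" for P Q :: "real^'n::finite^'n"
proof -
  define p where "p = (\<Sum>\<pi>\<in>{\<pi>. \<pi> permutes (UNIV::'n set)}. smult (of_int (sign \<pi>)) (\<Prod>i\<in>UNIV. [:Q$i$\<pi> i, P$i$\<pi> i:]))"
  have "det (t *\<^sub>R P + Q) = poly p t" for t
    unfolding det_def p_def by (simp add: poly_sum poly_prod algebra_simps)
  then show ?thesis by blast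
qed

lemma det_roots_finite:
  fixes P Q :: "real^'n::finite^'n"
  assumes "det (t0 *\<^sub>R P + Q) \<noteq> 0"
  shows "finite {t. det (t *\<^sub>R P + Q) = 0}"
proof -
  obtain p where p: "\<And>t. det (t *\<^sub>R P + Q) = poly p t" using det_poly by blast
  have "p \<noteq> 0" using assms p[of t0] by auto
  then show ?thesis unfolding p by (rule poly_roots_finite)
qed

lemma det_large:
  fixes Q :: "real^'n::finite^'n"
  shows "det ((1 + (\<Sum>k\<in>UNIV. \<Sum>j\<in>UNIV. \<bar>Q$k$j\<bar>)) *\<^sub>R mat 1 + Q) \<noteq> 0"
proof
  define L where "L = 1 + (\<Sum>k\<in>UNIV. \<Sum>j\<in>UNIV. \<bar>Q$k$j\<bar>)"
  assume "det ((1 + (\<Sum>k\<in>UNIV. \<Sum>j\<in>UNIV. \<bar>Q$k$j\<bar>)) *\<^sub>R mat 1 + Q) = 0"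
  then obtain z where z: "z \<noteq> 0" "(L *\<^sub>R mat 1 + Q) *v z = 0" using det0_ker L_def by metis
  define m where "m = Max (range (\<lambda>j. \<bar>z$j\<bar>))"
  have mge: "\<bar>z$j\<bar> \<le> m" for j unfolding m_def by (intro Max_ge) auto
  have "m \<in> range (\<lambda>j. \<bar>z$j\<bar>)" unfolding m_def by (rule Max_in) auto
  then obtain k where k: "\<bar>z$k\<bar> = m" by auto
  obtain j0 where "z$j0 \<noteq> 0" using z(1) by (auto simp: vec_eq_iff)
  then have mpos: "m > 0" using mge[of j0] by linarith
  have row: "L * z$k + (\<Sum>j\<in>UNIV. Q$k$j * z$j) = 0"
  proof -
    have t: "((L *\<^sub>R mat 1 + Q) $ k $ j) * z $ j = (if j = k then L * z $ j else 0) + Q$k$j * z$j" for j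
      by (simp add: mat_def distrib_right)
    have "((L *\<^sub>R mat 1 + Q) *v z) $ k = 0" using z(2) by simp
    then have "(\<Sum>j\<in>UNIV. ((L *\<^sub>R mat 1 + Q) $ k $ j) * z $ j) = 0"
      by (simp add: matrix_vector_mult_def)
    then show ?thesis unfolding t sum.distrib by simp
  qed
  have "0 \<le> (\<Sum>k\<in>UNIV. \<Sum>j\<in>UNIV. \<bar>Q$k$j\<bar>)" by (intro sum_nonneg) auto
  then have Lpos: "L > 0" unfolding L_def by linarith
  have s: "(\<Sum>j\<in>UNIV. Q$k$j * z$j) = - (L * z$k)" using row by linarith
  have "L * m = \<bar>\<Sum>j\<in>UNIV. Q$k$j * z$j\<bar>"
    unfolding s using k Lpos by (simp add: abs_mult)
  also have "\<dots> \<le> (\<Sum>j\<in>UNIV. \<bar>Q$k$j\<bar> * m)"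
    by (rule order_trans[OF sum_abs]) (auto intro!: sum_mono simp: abs_mult intro: mult_left_mono mge)
  also have "\<dots> = (\<Sum>j\<in>UNIV. \<bar>Q$k$j\<bar>) * m" by (simp add: sum_distrib_right)
  also have "\<dots> \<le> (L - 1) * m"
  proof -
    have "(\<Sum>j\<in>UNIV. \<bar>Q$k$j\<bar>) \<le> (\<Sum>k\<in>UNIV. \<Sum>j\<in>UNIV. \<bar>Q$k$j\<bar>)"
      by (rule member_le_sum) (auto intro: sum_nonneg)
    then show ?thesis using mpos L_def by (intro mult_right_mono) auto
  qed
  finally show False using mpos by (simp add: algebra_simps)
qed

lemma ivt_cp:
  assumes "Y 0 \<in> cpS R" "Y N \<notin> cpS R" "\<forall>i<N. \<exists>a b c. Y (Suc i) = Y i + rank1 a b c"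
  shows "\<exists>i\<le>N. Y i \<in> cpS (Suc R) \<and> Y i \<notin> cpS R"
proof -
  define i where "i = (LEAST i. Y i \<notin> cpS R)"
  have iN: "i \<le> N" unfolding i_def using assms(2) by (rule Least_le)
  have Yi: "Y i \<notin> cpS R" unfolding i_def using assms(2) by (rule LeastI)
  have i0: "i \<noteq> 0"
  proof
    assume "i = 0" then show False using Yi assms(1) by simp
  qed
  have prev: "Y (i - 1) \<in> cpS R" using not_less_Least[of "i - 1" "\<lambda>i. Y i \<notin> cpS R"] i0 unfolding i_def by auto
  obtain a b c where "Y (Suc (i - 1)) = Y (i - 1) + rank1 a b c" using assms(3) iN i0 by (metis Suc_pred' diff_less less_le_trans not_gr_zero zero_less_one)
  then have "Y i = Y (i - 1) + rank1 a b c" using i0 by simp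
  then have "Y i \<in> cpS (Suc R)" using cpS_add1[OF prev] by simp
  then show ?thesis using iN Yi by blast
qed

lemma exists_exact:
  assumes "R < R_typ_max TYPE('n::finite \<times> 'd::finite)"
  shows "\<exists>T::('n,'d) tensor3. T \<in> cpS (Suc R) \<and> T \<notin> cpS R"
proof -
  let ?K = "R_typ_max TYPE('n \<times> 'd)"
  have "emeasure lebesgue (Prk ?K :: ('n,'d) tensor3 set) > 0" using typical_max typical_iff by blast
  then have "Prk ?K \<noteq> ({} :: ('n,'d) tensor3 set)" by auto
  then obtain Ts :: "('n,'d) tensor3" where "cp_rank Ts = ?K" unfolding Prk_def by auto
  then have Ts: "Ts \<in> cpS ?K" "Ts \<notin> cpS R" using cp_rank_in[of Ts] assms by (auto simp: cpS_iff)
  obtain A B C where TsA: "Ts = cp_tensor ?K A B C" using Ts(1) unfolding cpS_def by blast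
  have "\<exists>i\<le>?K. cp_tensor i A B C \<in> cpS (Suc R) \<and> cp_tensor i A B C \<notin> cpS R"
  proof (rule ivt_cp[where Y="\<lambda>i. cp_tensor i A B C"])
    show "cp_tensor 0 A B C \<in> cpS R" using cpS_0 cpS_mono[of 0 R] by auto
    show "cp_tensor ?K A B C \<notin> cpS R" using Ts TsA by simp
    show "\<forall>i<?K. \<exists>a b c. cp_tensor (Suc i) A B C = cp_tensor i A B C + rank1 a b c"
      using cp_tensor_Suc by blast
  qed
  then show ?thesis by blast
qed


lemma rank1_scale: "rank1 (c *\<^sub>R a) b d = c *\<^sub>R rank1 a b d"
  by (simp add: rank1_def vec_eq_iff)

lemma Mx_add: "Mx i0 g (T1 + T2) = Mx i0 g T1 + Mx i0 g T2"
  by (simp add: Mx_def vec_eq_iff)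

lemma Mx_scale: "Mx i0 g (c *\<^sub>R T) = c *\<^sub>R Mx i0 g T"
  by (simp add: Mx_def vec_eq_iff)

lemma large_exists:
  fixes g :: "'n::finite \<Rightarrow> 'd::finite" and i0 :: 'n
  assumes g: "inj g" and nR: "CARD('n) \<le> R" and RK: "R < R_typ_max TYPE('n \<times> 'd)"
  shows "\<exists>T::('n,'d) tensor3. T \<in> cpS (Suc R) \<and> T \<notin> cpS R \<and> det (Mx i0 g T) \<noteq> 0"
proof -
  let ?K = "R_typ_max TYPE('n \<times> 'd)"
  let ?n = "CARD('n)"
  let ?B = "{T::('n,'d) tensor3. det (Mx i0 g T) = 0}"
  have pos: "emeasure lebesgue (Prk ?K :: ('n,'d) tensor3 set) > 0" using typical_max typical_iff by blast
  have "\<not> Prk ?K \<subseteq> ?B"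
  proof
    assume sub: "Prk ?K \<subseteq> ?B"
    have "?B \<in> null_sets lebesgue" using singular_negligible[OF g] negligible_iff_null_sets by blast
    then have "emeasure lebesgue (Prk ?K :: ('n,'d) tensor3 set) \<le> emeasure lebesgue ?B"
      by (intro emeasure_mono sub) auto
    then show False using pos \<open>?B \<in> null_sets lebesgue\<close> by auto
  qed
  then obtain Ts :: "('n,'d) tensor3" where Tsr: "cp_rank Ts = ?K" and Tsd: "det (Mx i0 g Ts) \<noteq> 0"
    unfolding Prk_def by auto
  then have Ts: "Ts \<in> cpS ?K" "Ts \<notin> cpS R" using cp_rank_in[of Ts] RK by (auto simp: cpS_iff)
  obtain A B C where TsA: "Ts = cp_tensor ?K A B C" using Ts(1) unfolding cpS_def by blast
  obtain e where e: "bij_betw e {0..<?n} (UNIV::'n set)" using ex_bij_betw_nat_finite[of "UNIV::'n set"] by auto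
  define Dt where "Dt s = rank1 (axis i0 1) (axis (g (e s)) 1) (axis (e s) (1::real))" for s
  define Dp where "Dp t = (\<Sum>s<t. Dt s)" for t
  have MxDp: "Mx i0 g (Dp ?n) = mat 1"
  proof -
    have "Mx i0 g (Dp ?n) $ k $ j = mat 1 $ k $ j" for k j
    proof -
      have "Mx i0 g (Dp ?n) $ k $ j = (\<Sum>s\<in>{0..<?n}. (\<lambda>i. if i = j \<and> i = k then 1 else 0) (e s))"
        unfolding Mx_def Dp_def Dt_def rank1_def
        by (auto simp: sum_component axis_def lessThan_atLeast0 dest: injD[OF g] intro!: sum.cong)
      also have "\<dots> = (\<Sum>i\<in>UNIV. if i = j \<and> i = k then 1 else 0)"
        by (rule sum.reindex_bij_betw[OF e])
      also have "\<dots> = mat 1 $ k $ j" by (cases "j = k") (auto simp: mat_def intro!: sum.neutral)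
      finally show ?thesis .
    qed
    then show ?thesis by (simp add: vec_eq_iff)
  qed
  have Dp0: "Dp 0 = 0" by (simp add: Dp_def)
  have DpS: "Dp (Suc t) = Dp t + Dt t" for t by (simp add: Dp_def)
  define Y where "Y l i = (if i \<le> ?K then l *\<^sub>R Dp ?n + cp_tensor i A B C else l *\<^sub>R (Dp ?n - Dp (i - ?K)) + Ts)" for l i
  have Yalt: "Y l i = l *\<^sub>R (Dp ?n - Dp (i - ?K)) + Ts" if "?K \<le> i" for l i
    using that by (cases "i = ?K") (auto simp: Y_def TsA Dp0)
  define P where "P i = (if i \<le> ?K then mat 1 else Mx i0 g (Dp ?n - Dp (i - ?K)))" for i
  define Q where "Q i = (if i \<le> ?K then Mx i0 g (cp_tensor i A B C) else Mx i0 g Ts)" for i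
  have MxY: "Mx i0 g (Y l i) = l *\<^sub>R P i + Q i" for l i
    by (simp add: Y_def P_def Q_def Mx_add Mx_scale MxDp)
  have nz: "\<exists>l0. det (l0 *\<^sub>R P i + Q i) \<noteq> 0" for i
  proof (cases "i \<le> ?K")
    case True then show ?thesis using det_large[of "Q i"] by (auto simp: P_def)
  next
    case False then show ?thesis using Tsd by (intro exI[of _ 0]) (simp add: P_def Q_def)
  qed
  define N where "N = ?K + ?n"
  have "finite (\<Union>i\<in>{..N}. {l. det (l *\<^sub>R P i + Q i) = 0})"
    using nz det_roots_finite by blast
  then obtain l where l: "l \<notin> (\<Union>i\<in>{..N}. {l. det (l *\<^sub>R P i + Q i) = 0})"
    using ex_new_if_finite[OF infinite_UNIV_char_0] by blast
  have "\<exists>i\<le>N. Y l i \<in> cpS (Suc R) \<and> Y l i \<notin> cpS R"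
  proof (rule ivt_cp)
    have "l *\<^sub>R Dp ?n = (\<Sum>s<?n. rank1 (l *\<^sub>R axis i0 1) (axis (g (e s)) 1) (axis (e s) 1))"
      by (simp add: Dp_def Dt_def scaleR_sum_right rank1_scale)
    also have "\<dots> \<in> cpS (card {..<?n})" by (rule sum_rank1_in) simp
    finally have "l *\<^sub>R Dp ?n \<in> cpS R" using cpS_mono[OF nR] by auto
    then show "Y l 0 \<in> cpS R" by (simp add: Y_def)
    have "0 < ?n" by simp
    then have "Y l N = Ts" using Yalt[of N l] by (simp add: N_def)
    then show "Y l N \<notin> cpS R" using Ts by simp
    show "\<forall>i<N. \<exists>a b c. Y l (Suc i) = Y l i + rank1 a b c"
    proof (intro allI impI)
      fix i assume "i < N"
      show "\<exists>a b c. Y l (Suc i) = Y l i + rank1 a b c"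
      proof (cases "Suc i \<le> ?K")
        case True
        then show ?thesis by (auto simp: Y_def cp_tensor_Suc)
      next
        case False
        then have "?K \<le> i" by simp
        then have "Y l (Suc i) = l *\<^sub>R (Dp ?n - Dp (Suc (i - ?K))) + Ts"
          using Yalt[of "Suc i" l] by (simp add: Suc_diff_le)
        also have "\<dots> = (l *\<^sub>R (Dp ?n - Dp (i - ?K)) + Ts) + (- l) *\<^sub>R Dt (i - ?K)"
          by (simp add: DpS algebra_simps)
        also have "\<dots> = Y l i + rank1 ((- l) *\<^sub>R axis i0 1) (axis (g (e (i - ?K))) 1) (axis (e (i - ?K)) 1)"
          unfolding rank1_scale Dt_def[symmetric] using Yalt[of i l] \<open>?K \<le> i\<close> by simp
        finally have "Y l (Suc i) = Y l i + rank1 ((- l) *\<^sub>R axis i0 1) (axis (g (e (i - ?K))) 1) (axis (e (i - ?K)) 1)" .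
        then show ?thesis by blast
      qed
    qed
  qed
  then obtain i where i: "i \<le> N" "Y l i \<in> cpS (Suc R)" "Y l i \<notin> cpS R" by blast
  have "det (Mx i0 g (Y l i)) \<noteq> 0" using l i(1) unfolding MxY by auto
  then show ?thesis using i by blast
qed


lemma mode12_alt: "mode12 T h x $ k = (\<Sum>i\<in>UNIV. h$i * (\<Sum>j\<in>UNIV. T$i$j$k * x$j))"
  by (simp add: mode12_def sum_distrib_left mult_ac)

lemma mode12_axis_h: "mode12 T (axis i0 1) x $ k = (\<Sum>j\<in>UNIV. T$i0$j$k * x$j)"
proof -
  have m: "\<And>(y::real) c. (if c then 1 else 0) * y = (if c then y else 0)" by simp
  show ?thesis unfolding mode12_alt axis_def by (simp add: m)
qed

lemma large_case:
  fixes g :: "'n::finite \<Rightarrow> 'd::finite"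
  assumes g: "inj g" and s: "inj \<sigma>" and nR: "CARD('n) \<le> R" and RK: "R < R_typ_max TYPE('n \<times> 'd)"
  shows "\<exists>f. f \<in> H_CPBIRNN \<sigma> (Suc R) \<and> f \<notin> (H_CPBIRNN \<sigma> R :: ((real^'d) list \<Rightarrow> (real^'n) list) set)"
proof -
  obtain i0 :: 'n where True by blast
  obtain T :: "('n,'d) tensor3" where T: "T \<in> cpS (Suc R)" "T \<notin> cpS R" "det (Mx i0 g T) \<noteq> 0"
    using large_exists[OF g nR RK] by blast
  define h0 :: "real^'n" where "h0 = axis i0 1"
  have surj: "\<exists>x. mode12 T h0 x = y" for y
  proof -
    obtain z where z: "Mx i0 g T *v z = y" using det_surj[OF T(3)] by blast
    define x :: "real^'d" where "x = (\<chi> j'. \<Sum>j\<in>UNIV. if g j = j' then z$j else 0)"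
    have "mode12 T h0 x $ k = y $ k" for k
    proof -
      have "mode12 T h0 x $ k = (\<Sum>j'\<in>UNIV. T$i0$j'$k * (\<Sum>j\<in>UNIV. if g j = j' then z$j else 0))"
        unfolding h0_def mode12_axis_h x_def by simp
      also have "\<dots> = (\<Sum>j'\<in>UNIV. \<Sum>j\<in>UNIV. if g j = j' then T$i0$j'$k * z$j else 0)"
        by (simp add: sum_distrib_left if_distrib[of "\<lambda>u. _ * u"] cong: if_cong)
      also have "\<dots> = (\<Sum>j\<in>UNIV. \<Sum>j'\<in>UNIV. if g j = j' then T$i0$j'$k * z$j else 0)"
        by (rule sum.swap)
      also have "\<dots> = (\<Sum>j\<in>UNIV. T$i0$(g j)$k * z$j)" by simp
      also have "\<dots> = (Mx i0 g T *v z) $ k" by (simp add: Mx_def matrix_vector_mult_def)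
      also have "\<dots> = y $ k" using z by simp
      finally show ?thesis .
    qed
    then show ?thesis by (auto simp: vec_eq_iff)
  qed
  define f where "f = (\<lambda>xs. cprnn_run \<sigma> T 0 0 0 h0 xs)"
  have fin: "f \<in> H_CPBIRNN \<sigma> (Suc R)" unfolding H_CPBIRNN_alt f_def using T(1) by blast
  have fout: "f \<notin> H_CPBIRNN \<sigma> R"
  proof
    assume "f \<in> H_CPBIRNN \<sigma> R"
    then obtain h0' T' where T': "T' \<in> cpS R" and feq: "f = (\<lambda>xs. cprnn_run \<sigma> T' 0 0 0 h0' xs)"
      unfolding H_CPBIRNN_alt by blast
    have "mode12 T' (axis i 1) x = mode12 T (axis i 1) x" for i x
    proof -
      obtain x1 where x1: "mode12 T h0 x1 = axis i 1" using surj by blast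
      show ?thesis by (rule birnn_agree[OF s _ x1]) (use feq f_def in simp)
    qed
    then have "T' = T" by (intro tensor_eqI) simp
    then show False using T' T(2) by simp
  qed
  show ?thesis using fin fout by blast
qed

lemma iv_case:
  fixes g :: "'n::finite \<Rightarrow> 'd::finite"
  assumes g: "inj g" and RK: "R < R_typ_max TYPE('n \<times> 'd)"
  shows "(H_CPRNN id R :: ((real^'d) list \<Rightarrow> (real^'n) list) set) \<subset> H_CPRNN id (Suc R)"
proof -
  obtain T :: "('n,'d) tensor3" where T: "T \<in> cpS (Suc R)" "T \<notin> cpS R" using exists_exact[OF RK] by blast
  define U :: "real^'d^'n" where "U = (\<chi> k j. if j = g k then 1 else 0)"
  have surj: "\<exists>x. U *v x = y" for y
  proof -
    define x :: "real^'d" where "x = (\<chi> j. \<Sum>k\<in>UNIV. if g k = j then y$k else 0)"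
    have "(U *v x) $ k = y $ k" for k
    proof -
      have m: "\<And>(u::real) c. (if c then 1 else 0) * u = (if c then u else 0)" by simp
      have "(U *v x) $ k = x $ g k" by (simp add: U_def matrix_vector_mult_def m)
      also have "\<dots> = y $ k" unfolding x_def by (simp add: inj_eq[OF g])
      finally show ?thesis .
    qed
    then show ?thesis by (auto simp: vec_eq_iff)
  qed
  define f where "f = (\<lambda>xs. cprnn_run id T 0 U 0 0 xs)"
  have fin: "f \<in> H_CPRNN id (Suc R)" unfolding H_CPRNN_alt f_def using T(1) by blast
  have fout: "f \<notin> H_CPRNN id R"
  proof
    assume "f \<in> H_CPRNN id R"
    then obtain h0' T' U' V' b' where T': "T' \<in> cpS R" and feq: "f = (\<lambda>xs. cprnn_run id T' V' U' b' h0' xs)"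
      unfolding H_CPRNN_alt by blast
    have "T' = T" by (rule rnn_id_agree[OF _ surj]) (use feq f_def in simp)
    then show False using T' T(2) by simp
  qed
  show ?thesis using H_CPRNN_mono fin fout by blast
qed

theorem theorem1:
  fixes \<sigma> :: "real \<Rightarrow> real"
  shows "(\<forall>R. (H_CPRNN \<sigma> R :: ((real ^ 'd::finite) list \<Rightarrow> (real ^ 'n::finite) list) set)
                \<subseteq> H_CPRNN \<sigma> (Suc R))
    \<and> (\<forall>R \<ge> R_max TYPE('n \<times> 'd).
          (H_CPRNN \<sigma> R :: ((real ^ 'd) list \<Rightarrow> (real ^ 'n) list) set) = H_CPRNN \<sigma> (Suc R))
    \<and> (CARD('n) \<le> CARD('d) \<longrightarrow> real_analytic \<sigma> \<longrightarrow> inj \<sigma> \<longrightarrow>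
          (\<forall>R < R_typ_max TYPE('n \<times> 'd).
             (H_CPBIRNN \<sigma> R :: ((real ^ 'd) list \<Rightarrow> (real ^ 'n) list) set) \<subset> H_CPBIRNN \<sigma> (Suc R)))
    \<and> (CARD('n) \<le> CARD('d) \<longrightarrow> \<sigma> = id \<longrightarrow>
          (\<forall>R < R_typ_max TYPE('n \<times> 'd).
             (H_CPRNN \<sigma> R :: ((real ^ 'd) list \<Rightarrow> (real ^ 'n) list) set) \<subset> H_CPRNN \<sigma> (Suc R)))"
proof (intro conjI allI impI)
  show "(H_CPRNN \<sigma> R :: ((real ^ 'd) list \<Rightarrow> (real ^ 'n) list) set) \<subseteq> H_CPRNN \<sigma> (Suc R)" for R
    by (rule H_CPRNN_mono)
  show "(H_CPRNN \<sigma> R :: ((real ^ 'd) list \<Rightarrow> (real ^ 'n) list) set) = H_CPRNN \<sigma> (Suc R)"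
    if "R_max TYPE('n \<times> 'd) \<le> R" for R
    using H_CPRNN_stable[OF that] .
next
  fix R
  assume c: "CARD('n) \<le> CARD('d)" and s: "inj \<sigma>" and RK: "R < R_typ_max TYPE('n \<times> 'd)"
  obtain g :: "'n \<Rightarrow> 'd" where g: "inj g"
    using card_le_inj[of "UNIV::'n set" "UNIV::'d set"] c by auto
  have "\<exists>f. f \<in> H_CPBIRNN \<sigma> (Suc R) \<and> f \<notin> (H_CPBIRNN \<sigma> R :: ((real^'d) list \<Rightarrow> (real^'n) list) set)"
  proof (cases "Suc R \<le> CARD('n)")
    case True then show ?thesis using small_case[OF g s] by blast
  next
    case False then show ?thesis using large_case[OF g s _ RK] by simp
  qed
  then show "(H_CPBIRNN \<sigma> R :: ((real ^ 'd) list \<Rightarrow> (real ^ 'n) list) set) \<subset> H_CPBIRNN \<sigma> (Suc R)"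
    using H_CPBIRNN_mono by blast
next
  fix R
  assume c: "CARD('n) \<le> CARD('d)" and s: "\<sigma> = id" and RK: "R < R_typ_max TYPE('n \<times> 'd)"
  obtain g :: "'n \<Rightarrow> 'd" where g: "inj g"
    using card_le_inj[of "UNIV::'n set" "UNIV::'d set"] c by auto
  show "(H_CPRNN \<sigma> R :: ((real ^ 'd) list \<Rightarrow> (real ^ 'n) list) set) \<subset> H_CPRNN \<sigma> (Suc R)"
    unfolding s by (rule iv_case[OF g RK])
qed

end
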